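(* Let $n$ be a positive integer and $w_1\le\dots\le w_m$ a feasible partition of $n$ with partial sums $R_i=w_1+\dots+w_i$, $R_0=0$. Then for every $1\le i\le m$, $w_i \le \frac{2R_i+1}{3}$.
   Context: A weighing partition of a positive integer $n$ is a multiset of positive integers summing to $n$ such that every integer $\ell$ with $1\le\ell\le n$ is a sum $\sum_j u_jw_j$ with $u_j\in\{-1,0,1\}$. A feasible partition of $n$ is a weighing partition of $n$ whose number of parts $m$ is minimal among all weighing partitions of $n$, written $w_1\le\dots\le w_m$. *)

theory Defs
  imports Complex_Main
begin

text \<open>A partition of n is represented by a list of its parts (a multiset up to order).\<close>

definition weighing_partition :: "nat \<Rightarrow> nat list \<Rightarrow> bool" where
  "weighing_partition n ws \<longleftrightarrow>
     (\<forall>w\<in>set ws. 0 < w) \<and> sum_list ws = n \<and>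
     (\<forall>l\<in>{1..n}. \<exists>u :: nat \<Rightarrow> int.
        (\<forall>j<length ws. u j \<in> {-1, 0, 1}) \<and>
        int l = (\<Sum>j<length ws. u j * int (ws ! j)))"

definition feasible_partition :: "nat \<Rightarrow> nat list \<Rightarrow> bool" where
  "feasible_partition n ws \<longleftrightarrow>
     weighing_partition n ws \<and>
     (\<forall>vs. weighing_partition n vs \<longrightarrow> length ws \<le> length vs)"

end

theory Submission
  imports Defs
begin

lemma key:
  fixes n :: nat and ws :: "nat list" and k :: nat
  assumes wp: "weighing_partition n ws"
    and so: "sorted ws"
    and kl: "k < length ws"
  shows "ws ! k \<le> 2 * sum_list (take k ws) + 1"
proof (rule ccontr)
  assume "\<not> ?thesis"
  hence big: "ws ! k \<ge> 2 * sum_list (take k ws) + 2" by simp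
  define R where "R = sum_list (take k ws)"
  define L where "L = length ws"
  have nsum: "n = (\<Sum>j<L. ws ! j)" using wp unfolding weighing_partition_def L_def
    by (simp add: sum_list_sum_nth atLeast0LessThan)
  have Rsum: "R = (\<Sum>j<k. ws ! j)" unfolding R_def using kl
    by (simp add: sum_list_sum_nth atLeast0LessThan min_def)
  have split: "{..<L} = {..<k} \<union> {k..<L}" using kl L_def by auto
  have disj: "{..<k} \<inter> {k..<L} = {}" by auto
  have "(\<Sum>j<L. ws ! j) = (\<Sum>j<k. ws ! j) + (\<Sum>j\<in>{k..<L}. ws ! j)"
    unfolding split by (rule sum.union_disjoint) auto
  moreover have "(\<Sum>j\<in>{k..<L}. ws ! j) \<ge> ws ! k"
    using kl L_def by (intro member_le_sum) auto
  ultimately have nge: "n \<ge> R + ws ! k" using nsum Rsum by simp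
  define l where "l = n - (2*R+1)"
  have lrange: "l \<in> {1..n}" using nge big unfolding l_def R_def by auto
  then obtain u :: "nat \<Rightarrow> int" where u1: "\<forall>j<L. u j \<in> {-1,0,1}"
    and u2: "int l = (\<Sum>j<L. u j * int (ws ! j))"
    using wp unfolding weighing_partition_def L_def by blast
  define f where "f j = (1 - u j) * int (ws ! j)" for j
  have "(\<Sum>j<L. f j) = (\<Sum>j<L. int (ws ! j)) - (\<Sum>j<L. u j * int (ws ! j))"
    unfolding f_def by (simp add: algebra_simps sum_subtractf)
  also have "(\<Sum>j<L. int (ws ! j)) = int n" using nsum by simp
  finally have tot: "(\<Sum>j<L. f j) = 2 * int R + 1" using u2 nge big unfolding l_def R_def by (simp add: of_nat_diff)
  have fnn: "\<And>j. j < L \<Longrightarrow> f j \<ge> 0" using u1 unfolding f_def by fastforce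
  have fle: "\<And>j. j < L \<Longrightarrow> f j \<le> 2 * int (ws ! j)" using u1 unfolding f_def by fastforce
  have fsplit: "(\<Sum>j<L. f j) = (\<Sum>j<k. f j) + (\<Sum>j\<in>{k..<L}. f j)"
    unfolding split by (rule sum.union_disjoint) auto
  moreover have small: "(\<Sum>j<k. f j) \<le> 2 * int R"
  proof -
    have "(\<Sum>j<k. f j) \<le> (\<Sum>j<k. 2 * int (ws ! j))"
      using fle kl L_def by (intro sum_mono) auto
    also have "\<dots> = 2 * int R" using Rsum by (simp add: sum_distrib_left)
    finally show ?thesis .
  qed
  moreover have smallnn: "(\<Sum>j<k. f j) \<ge> 0" using fnn kl L_def by (intro sum_nonneg) auto
  ultimately have largeval: "(\<Sum>j\<in>{k..<L}. f j) \<ge> 1" using tot by linarith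
  then obtain j where j: "j \<in> {k..<L}" "f j \<noteq> 0"
    by (metis not_one_le_zero sum.neutral)
  have "f j \<ge> int (ws ! j)" using u1 j unfolding f_def by fastforce
  moreover have "ws ! j \<ge> ws ! k" using so j L_def by (simp add: sorted_nth_mono)
  moreover have "(\<Sum>j\<in>{k..<L}. f j) \<ge> f j"
    using j fnn by (intro member_le_sum) auto
  ultimately have "(\<Sum>j\<in>{k..<L}. f j) \<ge> 2 * int R + 2" using big unfolding R_def by linarith
  with smallnn tot fsplit small show False by linarith
qed

theorem mainTheorem5:
  fixes n :: nat and ws :: "nat list" and i :: nat
  assumes "0 < n"
    and "feasible_partition n ws"
    and "sorted ws"
    and "1 \<le> i" and "i \<le> length ws"
  shows "real (ws ! (i - 1)) \<le> (2 * real (sum_list (take i ws)) + 1) / 3"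
proof -
  have wp: "weighing_partition n ws" using assms(2) unfolding feasible_partition_def by simp
  have kl: "i - 1 < length ws" using assms by simp
  have k: "ws ! (i-1) \<le> 2 * sum_list (take (i-1) ws) + 1" using key[OF wp assms(3) kl] .
  have "take i ws = take (i-1) ws @ [ws ! (i-1)]" using assms(4) kl
    by (metis Suc_diff_1 less_le_trans take_Suc_conv_app_nth zero_less_one)
  hence "sum_list (take i ws) = sum_list (take (i-1) ws) + ws ! (i-1)" by simp
  with k show ?thesis by simp
qed

end
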